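(* Let $(a_m)_{m\ge1}$ be defined by $a_1=2$ and $a_{m+1}=a_m+1/a_m$. Then for every $m\ge1$ the lower bound $a_m\ge\sqrt{m+\sqrt{m(m+1)}}$ holds, and $$\frac{a_{m+1}}{a_m}\le\sqrt{\frac{m+1}{m}},$$ so the sequence $\big(a_m/\sqrt m\big)_{m\ge1}$ is non-increasing; moreover $\lim_{m\to\infty}a_m/\sqrt m=\sqrt2$.
   Context: $a_m$ is the right endpoint of the support $[-a_m,a_m]$ of the $m$-fold monotone convolution of the standard semicircle law $\frac1{2\pi}\sqrt{4-x^2}\mathbf 1_{[-2,2]}dx$. *)

theory Defs
  imports "HOL-Analysis.Analysis"
begin

fun a_seq :: "nat \<Rightarrow> real" where
  "a_seq 0 = 2"
| "a_seq (Suc n) = a_seq n + 1 / a_seq n"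

(* a m is a_m for m \<ge> 1 (a 0 is an unused dummy value equal to a_1) *)
definition a :: "nat \<Rightarrow> real" where
  "a m = a_seq (m - 1)"

end

theory Submission
  imports Defs "HOL-Real_Asymp.Real_Asymp"
begin

lemma a_pos: "a_seq n \<ge> 2"
proof (induction n)
  case (Suc n)
  then show ?case by (simp add: add_increasing2)
qed simp

lemma helper_id:
  fixes b L :: real assumes "b > 0" "L > 0"
  shows "b + 1/b - (L + 1/L) = (b - L) * (1 - 1/(b*L))"
  using assms by (simp add: field_simps)

lemma sq_step: "(a_seq (Suc n))^2 = (a_seq n)^2 + 2 + 1/(a_seq n)^2"
proof -
  have "a_seq n \<noteq> 0" using a_pos[of n] by auto
  then show ?thesis by (simp add: power2_eq_square field_simps)
qed

lemma lower: "(a_seq n)^2 \<ge> real (n+1) + sqrt (real (n+1) * (real (n+1) + 1))"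
proof (induction n)
  case 0
  have "sqrt 2 \<le> 2" by (simp add: real_le_lsqrt real_sqrt_le_iff)
  then show ?case by simp
next
  case (Suc n)
  define m where "m = real (n+1)"
  define s where "s = sqrt (m * (m+1))"
  define b where "b = (a_seq n)^2"
  have m1: "m \<ge> 1" unfolding m_def by simp
  have s0: "s \<ge> m" unfolding s_def by (rule real_le_rsqrt) (use m1 in \<open>simp add: power2_eq_square algebra_simps\<close>)
  have ss: "s^2 = m*(m+1)" unfolding s_def using m1 by simp
  have bL: "b \<ge> m + s" using Suc unfolding b_def m_def s_def by simp
  have L1: "m + s \<ge> 1" using s0 m1 by simp
  have mono: "b + 1/b \<ge> (m+s) + 1/(m+s)"
  proof -
    have "b + 1/b - ((m+s) + 1/(m+s)) = (b - (m+s)) * (1 - 1/(b*(m+s)))"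
    proof -
      have "b > 0" "m+s > 0" using L1 bL by auto
      then show ?thesis by (rule helper_id)
    qed
    moreover have "1/(b*(m+s)) \<le> 1"
    proof -
      have "1*1 \<le> b*(m+s)" using L1 bL by (intro mult_mono) auto
      then show ?thesis by simp
    qed
    ultimately show ?thesis using bL
      by (smt (verit) mult_nonneg_nonneg)
  qed
  have inv: "1/(m+s) = (s-m)/m"
    using L1 m1 ss by (simp add: field_simps power2_eq_square)
  have key: "sqrt ((m+1)*(m+2)) \<le> s*(m+1)/m"
  proof (rule real_le_lsqrt)
    show "0 \<le> s*(m+1)/m" using s0 m1 by simp
    have "(s*(m+1)/m)^2 = m*(m+1)*(m+1)^2/m^2" using ss by (simp add: power_mult_distrib power_divide)
    also have "\<dots> = (m+1)^3/m" using m1 by (simp add: power2_eq_square power3_eq_cube field_simps)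
    finally show "(m+1)*(m+2) \<le> (s*(m+1)/m)^2" using m1
      by (simp add: le_divide_eq power3_eq_cube algebra_simps)
  qed
  have "(a_seq (Suc n))^2 = b + 2 + 1/b" unfolding b_def sq_step by simp
  also have "\<dots> \<ge> m + s + 2 + (s-m)/m" using mono inv by simp
  finally have "(a_seq (Suc n))^2 \<ge> m + 1 + s*(m+1)/m" using m1 by (simp add: field_simps)
  moreover have "real (Suc n + 1) = m+1" unfolding m_def by simp
  ultimately show ?case using key by (simp add: algebra_simps)
qed

lemma lower2: "(a_seq n)^2 \<ge> 2 * real (n+1)"
proof -
  have "sqrt (real (n+1) * (real (n+1) + 1)) \<ge> real (n+1)"
    by (rule real_le_rsqrt) (simp add: power2_eq_square algebra_simps)
  then show ?thesis using lower[of n] by simp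
qed

lemma upper: "(a_seq n)^2 \<le> 2 * real (n+1) + 2 + 2 * sqrt (real (n+1))"
proof (induction n)
  case 0
  then show ?case by simp
next
  case (Suc n)
  define m where "m = real (n+1)"
  have m1: "m \<ge> 1" unfolding m_def by simp
  have b: "(a_seq n)^2 \<ge> 2*m" using lower2[of n] unfolding m_def .
  have i: "1/(a_seq n)^2 \<le> 1/(2*m)" using b m1 by (simp add: frac_le)
  have "1/(2*m) \<le> 2*(sqrt (m+1) - sqrt m)"
  proof -
    have pr: "(sqrt (m+1) - sqrt m) * (sqrt (m+1) + sqrt m) = 1"
      using m1 by (simp add: algebra_simps)
    have "sqrt (m+1) + sqrt m > 0" using m1 by (simp add: add_pos_nonneg)
    then have d: "sqrt (m+1) - sqrt m = 1/(sqrt (m+1) + sqrt m)"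
      using pr by (simp add: field_simps)
    have "sqrt (m+1) + sqrt m \<le> 4*m"
    proof -
      have "sqrt m \<le> m" using m1 by (simp add: real_sqrt_le_iff real_le_lsqrt power2_eq_square)
      moreover have "sqrt (m+1) \<le> 2*m"
      proof (rule real_le_lsqrt)
        have "1*m \<le> m*m" using m1 by (intro mult_right_mono) auto
        then have "m + 1 \<le> 4*(m*m)" using m1 by linarith
        then show "m + 1 \<le> (2*m)^2" unfolding power2_eq_square by (simp add: algebra_simps)
      qed (use m1 in auto)
      ultimately show ?thesis using m1 by linarith
    qed
    moreover have "sqrt (m+1) + sqrt m > 0" using m1 by (simp add: add_pos_nonneg)
    ultimately show ?thesis unfolding d using m1 by (simp add: field_simps)
  qed
  then have "(a_seq (Suc n))^2 \<le> 2*m + 2 + 2* sqrt m + 2 + 2*(sqrt (m+1) - sqrt m)"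
    using Suc i unfolding sq_step m_def by simp
  moreover have "real (Suc n + 1) = m+1" unfolding m_def by simp
  ultimately show ?case by (simp add: add.commute)
qed

lemma a_Suc: "a (Suc n) = a_seq n" unfolding a_def by simp

theorem mainTheorem11:
  shows "(\<forall>m\<ge>1. a m \<ge> sqrt (real m + sqrt (real m * (real m + 1))))
       \<and> (\<forall>m\<ge>1. a (m + 1) / a m \<le> sqrt ((real m + 1) / real m))
       \<and> (\<forall>m\<ge>1. a (m + 1) / sqrt (real (m + 1)) \<le> a m / sqrt (real m))
       \<and> ((\<lambda>m. a m / sqrt (real m)) \<longlonglongrightarrow> sqrt 2)"
proof -
  have P1: "a m \<ge> sqrt (real m + sqrt (real m * (real m + 1)))" if mge: "m \<ge> 1" for m
  proof -
    obtain n where n: "m = Suc n" using mge by (cases m) auto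
    have "sqrt ((a_seq n)^2) = a_seq n" using a_pos[of n] by simp
    then show ?thesis using lower[of n] n a_Suc
      by (metis Suc_eq_plus1 real_sqrt_le_mono)
  qed
  have P2: "a (m + 1) / a m \<le> sqrt ((real m + 1) / real m)" if mge: "m \<ge> 1" for m
  proof -
    obtain n where n: "m = Suc n" using mge by (cases m) auto
    define b where "b = (a_seq n)^2"
    define mm where "mm = real m"
    define s where "s = sqrt (mm * (mm+1))"
    have m1: "mm \<ge> 1" using that unfolding mm_def by simp
    have s0: "s \<ge> 0" unfolding s_def using m1 by simp
    have ss: "s^2 = mm*(mm+1)" unfolding s_def using m1 by simp
    have bL: "b \<ge> mm + s" using lower[of n] n unfolding b_def mm_def s_def by simp
    have bp: "b > 0" using bL m1 s0 by simp
    have q: "a (m+1) / a m = 1 + 1/b"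
      using n a_Suc[of n] a_Suc[of m] a_pos[of n] unfolding b_def
      by (simp add: field_simps power2_eq_square)
    have "(b - mm)^2 \<ge> s^2" using bL s0 by (simp add: power_mono)
    then have ineq: "b^2 \<ge> 2*mm*b + mm" using ss by (simp add: power2_eq_square algebra_simps)
    have "(1 + 1/b)^2 \<le> (mm+1)/mm"
    proof -
      have "(1 + 1/b)^2 = (b^2 + 2*b + 1)/b^2" using bp by (simp add: power2_eq_square field_simps)
      also have "\<dots> \<le> (mm+1)/mm"
        using bp m1 ineq by (simp add: divide_le_eq le_divide_eq field_simps power2_eq_square)
      finally show ?thesis .
    qed
    then have "1 + 1/b \<le> sqrt ((mm+1)/mm)" using bp by (simp add: real_le_rsqrt)
    then show ?thesis using q unfolding mm_def by simp
  qed
  have P3: "a (m + 1) / sqrt (real (m + 1)) \<le> a m / sqrt (real m)" if mge: "m \<ge> 1" for m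
  proof -
    obtain n where n: "m = Suc n" using mge by (cases m) auto
    have ap: "a m > 0" using a_pos[of n] n a_Suc by (metis less_le_trans zero_less_numeral)
    have "a (m+1) \<le> a m * sqrt ((real m + 1) / real m)"
      using P2[OF that] ap by (simp add: divide_le_eq mult.commute)
    also have "\<dots> = a m * sqrt (real (m+1)) / sqrt (real m)"
      by (simp add: real_sqrt_divide)
    finally show ?thesis using that by (simp add: field_simps)
  qed
  have P4: "(\<lambda>m. a m / sqrt (real m)) \<longlonglongrightarrow> sqrt 2"
  proof -
    have lo: "(\<lambda>n. 2::real) \<longlonglongrightarrow> 2" by simp
    have hi: "(\<lambda>n. (2 * real (n+1) + 2 + 2 * sqrt (real (n+1))) / real (n+1)) \<longlonglongrightarrow> 2"
      by real_asymp
    have "(\<lambda>n. (a_seq n)^2 / real (n+1)) \<longlonglongrightarrow> 2"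
    proof (rule tendsto_sandwich[OF _ _ lo hi])
      show "\<forall>\<^sub>F n in sequentially. 2 \<le> (a_seq n)\<^sup>2 / real (n + 1)"
        using lower2 by (auto simp: le_divide_eq mult.commute)
      show "\<forall>\<^sub>F n in sequentially. (a_seq n)\<^sup>2 / real (n + 1) \<le> (2 * real (n+1) + 2 + 2 * sqrt (real (n+1))) / real (n+1)"
        using upper by (intro always_eventually allI divide_right_mono) auto
    qed
    then have "(\<lambda>n. sqrt ((a_seq n)^2 / real (n+1))) \<longlonglongrightarrow> sqrt 2"
      by (rule tendsto_real_sqrt)
    moreover have "sqrt ((a_seq n)^2 / real (n+1)) = a (Suc n) / sqrt (real (Suc n))" for n
      using a_pos[of n] a_Suc[of n] by (simp add: real_sqrt_divide)
    ultimately have "(\<lambda>n. a (Suc n) / sqrt (real (Suc n))) \<longlonglongrightarrow> sqrt 2" by simp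
    then show ?thesis by (rule filterlim_sequentially_Suc[THEN iffD1])
  qed
  show ?thesis using P1 P2 P3 P4 by blast
qed

end
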